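(* Let $\theta\in\mathbb{R}$, $\mu=e^{\mathrm{i}\pi\theta}$, and let $(\eta_{\alpha\beta})_{\alpha,\beta=1}^4$ be the matrix with rows $(1,1,\bar\mu,\mu)$, $(1,1,\mu,\bar\mu)$, $(\mu,\bar\mu,1,1)$, $(\bar\mu,\mu,1,1)$. Let $\mathcal{A}(\mathbb{C}^4_\theta)$ be the algebra described in the context, let $k\geq 1$, and let $R$ be a complex algebra containing elements $N^\alpha_{br}$ and $M^\beta_{rd}$ for $\alpha,\beta\in\{1,\dots,4\}$, $b,d\in\{1,\dots,k\}$, $r\in\{1,\dots,2k+2\}$. Define, for $b,d=1,\dots,k$, the elements $$(\tau_z\sigma_z)_{bd}:=\sum_{r=1}^{2k+2}\sum_{\alpha,\beta=1}^4 N^\alpha_{br}M^\beta_{rd}\otimes z_\alpha z_\beta\in R\otimes\mathcal{A}(\mathbb{C}^4_\theta).$$ Then $(\tau_z\sigma_z)_{bd}=0$ for all $b,d=1,\dots,k$ if and only if $$\sum_{r=1}^{2k+2}\left(N^\alpha_{br}M^\beta_{rd}+\eta_{\beta\alpha}N^\beta_{br}M^\alpha_{rd}\right)=0$$ for all $b,d=1,\dots,k$ and all $\alpha,\beta=1,\dots,4$.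
   Context: $\mathcal{A}(\mathbb{C}^4_\theta)$ is the unital $*$-algebra generated by $z_1,\dots,z_4$ and $z_1^*,\dots,z_4^*$ subject to the relations $z_jz_l=\eta_{jl}z_lz_j$, $z_jz_l^*=\eta_{lj}z_l^*z_j$, $z_j^*z_l^*=\eta_{jl}z_l^*z_j^*$ for $j,l=1,\dots,4$. Here $\tau_z=\sum_\alpha N^\alpha\otimes z_\alpha$ and $\sigma_z=\sum_\beta M^\beta\otimes z_\beta$ are the algebra-valued $k\times(2k+2)$ and $(2k+2)\times k$ matrices of the two maps of a monad, and $\tau_z\sigma_z$ is their product. *)

theory Defs
  imports Complex_Main "HOL-Library.Poly_Mapping"
begin

class complex_algebra = ring +
  fixes scaleC :: "complex \<Rightarrow> 'a \<Rightarrow> 'a"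
  assumes scaleC_add_right: "scaleC c (x + y) = scaleC c x + scaleC c y"
    and scaleC_add_left: "scaleC (c + e) x = scaleC c x + scaleC e x"
    and scaleC_scaleC: "scaleC c (scaleC e x) = scaleC (c * e) x"
    and scaleC_one: "scaleC 1 x = x"
    and mult_scaleC_left: "scaleC c x * y = scaleC c (x * y)"
    and mult_scaleC_right: "x * scaleC c y = scaleC c (x * y)"

definition mu :: "real \<Rightarrow> complex" where
  "mu \<theta> = exp (\<i> * of_real pi * of_real \<theta>)"

definition eta :: "real \<Rightarrow> nat \<Rightarrow> nat \<Rightarrow> complex" where
  "eta \<theta> a b =
     (let m = mu \<theta>; mb = cnj (mu \<theta>)
      in [[1, 1, mb, m], [1, 1, m, mb], [m, mb, 1, 1], [mb, m, 1, 1]] ! (a - 1) ! (b - 1))"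

text \<open>Generators z_j and z_j^* of the free *-algebra.\<close>
datatype gen = Z nat | Zs nat

fun gidx :: "gen \<Rightarrow> nat" where
  "gidx (Z j) = j" | "gidx (Zs j) = j"

definition valid_word :: "gen list \<Rightarrow> bool" where
  "valid_word w \<longleftrightarrow> (\<forall>g\<in>set w. gidx g \<in> {1..4})"

text \<open>Defining relations (p, q, c), meaning p - c q = 0 in A(C^4_theta).\<close>
definition rels :: "real \<Rightarrow> (gen list \<times> gen list \<times> complex) set" where
  "rels \<theta> =
     {([Z j, Z l], [Z l, Z j], eta \<theta> j l) | j l. j \<in> {1..4} \<and> l \<in> {1..4}} \<union>
     {([Z j, Zs l], [Zs l, Z j], eta \<theta> l j) | j l. j \<in> {1..4} \<and> l \<in> {1..4}} \<union>
     {([Zs j, Zs l], [Zs l, Zs j], eta \<theta> j l) | j l. j \<in> {1..4} \<and> l \<in> {1..4}}"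

text \<open>R \<otimes> (free algebra) is modelled as finitely supported maps from words to R,
the pure tensor r \<otimes> w being single w r. The elements r \<otimes> (u (p - c q) v) span
R \<otimes> I, where I is the two-sided ideal generated by the relations.\<close>
definition ideal_gens :: "real \<Rightarrow> (gen list \<Rightarrow>\<^sub>0 'r::complex_algebra) set" where
  "ideal_gens \<theta> = {Poly_Mapping.single (u @ p @ v) r - Poly_Mapping.single (u @ q @ v) (scaleC c r)
      | u v p q c r. valid_word u \<and> valid_word v \<and> (p, q, c) \<in> rels \<theta>}"

inductive_set tensor_ideal :: "real \<Rightarrow> (gen list \<Rightarrow>\<^sub>0 'r::complex_algebra) set" for \<theta> where
  zero: "0 \<in> tensor_ideal \<theta>"
| add: "x \<in> ideal_gens \<theta> \<Longrightarrow> y \<in> tensor_ideal \<theta> \<Longrightarrow> x + y \<in> tensor_ideal \<theta>"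

text \<open>Since R \<otimes> (Free / I) = (R \<otimes> Free) / (R \<otimes> I) over the field C, an element of
R \<otimes> Free vanishes in R \<otimes> A(C^4_theta) iff it lies in R \<otimes> I.\<close>
definition vanishes_in_RA :: "real \<Rightarrow> (gen list \<Rightarrow>\<^sub>0 'r::complex_algebra) \<Rightarrow> bool" where
  "vanishes_in_RA \<theta> X \<longleftrightarrow> X \<in> tensor_ideal \<theta>"

definition tauSigma :: "(nat \<Rightarrow> nat \<Rightarrow> nat \<Rightarrow> 'r::complex_algebra) \<Rightarrow> (nat \<Rightarrow> nat \<Rightarrow> nat \<Rightarrow> 'r)
    \<Rightarrow> nat \<Rightarrow> nat \<Rightarrow> nat \<Rightarrow> (gen list \<Rightarrow>\<^sub>0 'r)" where
  "tauSigma N M k b d =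
     (\<Sum>r\<in>{1..2*k+2}. \<Sum>\<alpha>\<in>{1..4}. \<Sum>\<beta>\<in>{1..4}.
        Poly_Mapping.single [Z \<alpha>, Z \<beta>] (N \<alpha> b r * M \<beta> r d))"

end

theory Submission
  imports Defs
begin

lemma mu_cis: "mu t = cis (pi * t)"
  unfolding mu_def by (simp add: cis_conv_exp mult.assoc)
lemma mu_cnj: "mu t * cnj (mu t) = 1"
  unfolding mu_cis by (simp add: complex_eq_iff power2_eq_square[symmetric])
lemma eta_inv: "a \<in> {1..4} \<Longrightarrow> b \<in> {1..4} \<Longrightarrow> eta t a b * eta t b a = 1"
  using mu_cnj[of t]
  by (auto simp: eta_def Let_def eval_nat_numeral le_Suc_eq mult.commute)

context complex_algebra begin
lemma scaleC_zero[simp]: "scaleC c 0 = 0"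
proof -
  have "scaleC c 0 = scaleC c 0 + scaleC c 0" using scaleC_add_right[of c 0 0] by simp
  thus ?thesis by simp
qed
lemma scaleC_minus: "scaleC c (- x) = - scaleC c x"
proof -
  have "scaleC c x + scaleC c (- x) = 0" using scaleC_add_right[of c x "-x"] by simp
  thus ?thesis by (simp add: eq_neg_iff_add_eq_0 add.commute)
qed
lemma scaleC_diff: "scaleC e (y - z) = scaleC e y - scaleC e z"
  unfolding diff_conv_add_uminus by (simp only: scaleC_add_right scaleC_minus)
lemma scaleC_sum: "scaleC c (sum f S) = sum (\<lambda>i. scaleC c (f i)) S"
  by (induction S rule: infinite_finite_induct) (auto simp: scaleC_add_right)
end

lemma single_sum: "Poly_Mapping.single k (sum f S) = (\<Sum>i\<in>S. Poly_Mapping.single k (f i))"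
  by (induction S rule: infinite_finite_induct) (auto simp: single_add)

lemma app2_eq: "u @ [a,b] @ v = [c,d] \<longleftrightarrow> u = [] \<and> v = [] \<and> a = c \<and> b = d"
proof
  assume h: "u @ [a,b] @ v = [c,d]"
  hence "length (u @ [a,b] @ v) = 2" by simp
  hence "u = [] \<and> v = []" by simp
  thus "u = [] \<and> v = [] \<and> a = c \<and> b = d" using h by simp
qed simp

definition phi :: "real \<Rightarrow> nat \<Rightarrow> nat \<Rightarrow> (gen list \<Rightarrow>\<^sub>0 'r::complex_algebra) \<Rightarrow> 'r" where
  "phi t a b X = Poly_Mapping.lookup X [Z a, Z b] + scaleC (eta t b a) (Poly_Mapping.lookup X [Z b, Z a])"

lemma phi_gen:
  assumes x: "x \<in> ideal_gens t" and a: "a \<in> {1..4}" and b: "b \<in> {1..4}"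
  shows "phi t a b x = 0"
proof -
  obtain u v p q c r where xe: "x = Poly_Mapping.single (u @ p @ v) r - Poly_Mapping.single (u @ q @ v) (scaleC c r)"
    and pq: "(p, q, c) \<in> rels t"
    using x unfolding ideal_gens_def by blast
  have L: "Poly_Mapping.lookup x w = (r when u @ p @ v = w) - (scaleC c r when u @ q @ v = w)" for w
    by (simp add: xe lookup_minus lookup_single)
  from pq consider (zz) j l where "j \<in> {1..4}" "l \<in> {1..4}" "p = [Z j, Z l]" "q = [Z l, Z j]" "c = eta t j l"
    | (zs) j l where "p = [Z j, Zs l]" "q = [Zs l, Z j]"
    | (ss) j l where "p = [Zs j, Zs l]" "q = [Zs l, Zs j]"
    unfolding rels_def by blast
  then show ?thesis
  proof cases
    case zs
    have "u @ [Z j, Zs l] @ v \<noteq> [Z a', Z b']" "u @ [Zs l, Z j] @ v \<noteq> [Z a', Z b']" for a' b'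
      by (subst app2_eq, simp)+
    thus ?thesis by (simp add: phi_def L zs)
  next
    case ss
    have "u @ [Zs j, Zs l] @ v \<noteq> [Z a', Z b']" "u @ [Zs l, Zs j] @ v \<noteq> [Z a', Z b']" for a' b'
      by (subst app2_eq, simp)+
    thus ?thesis by (simp add: phi_def L ss)
  next
    case zz
    have e1: "eta t a b * eta t b a = 1" using eta_inv a b by blast
    have e2: "eta t b a * eta t a b = 1" using eta_inv a b by blast
    have e3: "eta t a a = 1" using eta_inv[OF a a, of t] a
      by (auto simp: eta_def Let_def eval_nat_numeral le_Suc_eq)
    have E: "u @ g1 # g2 # v = [g3, g4] \<longleftrightarrow> u=[] \<and> v=[] \<and> g1=g3 \<and> g2=g4" for g1 g2 g3 g4
      using app2_eq by simp
    show ?thesis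
    proof (cases "u = [] \<and> v = []")
      case False
      have n: "u @ g1 # g2 # v \<noteq> [g3, g4]" for g1 g2 g3 g4 using False by (simp add: E) blast
      have l1: "Poly_Mapping.lookup x [Z a, Z b] = 0" "Poly_Mapping.lookup x [Z b, Z a] = 0"
        by (simp_all add: L zz n)
      show ?thesis by (simp add: phi_def l1)
    next
      case True
      have LL: "Poly_Mapping.lookup x w = (r when [Z j, Z l] = w) - (scaleC (eta t j l) r when [Z l, Z j] = w)" for w
        using L[of w] True zz by simp
      consider "a = b" "j = a" "l = a" | "a \<noteq> b" "j = a" "l = b" | "a \<noteq> b" "j = b" "l = a"
        | "\<not> (j = a \<and> l = b)" "\<not> (j = b \<and> l = a)" by blast
      then show ?thesis
      proof cases
        case 1
        have l1: "Poly_Mapping.lookup x [Z a, Z a] = 0" using 1 e3 by (simp add: LL scaleC_one)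
        show ?thesis using l1 1(1) by (simp add: phi_def)
      next
        case 2
        have l1: "Poly_Mapping.lookup x [Z a, Z b] = r" using 2 by (simp add: LL)
        have l2: "Poly_Mapping.lookup x [Z b, Z a] = - scaleC (eta t a b) r" using 2 by (simp add: LL)
        have "scaleC (eta t b a) (scaleC (eta t a b) r) = r" using e2 by (simp only: scaleC_scaleC scaleC_one)
        thus ?thesis by (simp add: phi_def l1 l2 scaleC_minus)
      next
        case 3
        have l1: "Poly_Mapping.lookup x [Z a, Z b] = - scaleC (eta t b a) r" using 3 by (simp add: LL)
        have l2: "Poly_Mapping.lookup x [Z b, Z a] = r" using 3 by (simp add: LL)
        show ?thesis by (simp add: phi_def l1 l2)
      next
        case 4
        have l1: "Poly_Mapping.lookup x [Z a, Z b] = 0" "Poly_Mapping.lookup x [Z b, Z a] = 0"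
        proof -
          have ne: "[Z j, Z l] \<noteq> [Z a, Z b]" "[Z l, Z j] \<noteq> [Z a, Z b]"
            "[Z j, Z l] \<noteq> [Z b, Z a]" "[Z l, Z j] \<noteq> [Z b, Z a]" using 4 by auto
          show "Poly_Mapping.lookup x [Z a, Z b] = 0" "Poly_Mapping.lookup x [Z b, Z a] = 0"
            by (simp_all only: LL ne when_simps diff_zero)
        qed
        show ?thesis by (simp add: phi_def l1)
      qed
    qed
  qed
qed

lemma phi_ideal:
  assumes "X \<in> tensor_ideal t" "a \<in> {1..4}" "b \<in> {1..4}"
  shows "phi t a b X = 0"
  using assms(1)
proof induction
  case zero
  then show ?case by (simp add: phi_def)
next
  case (add x y)
  have "phi t a b (x + y) = phi t a b x + phi t a b y"
    by (simp add: phi_def lookup_add scaleC_add_right algebra_simps)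
  then show ?case using phi_gen[OF add(1) assms(2,3)] add(3) by simp
qed

lemma ideal_add: "x \<in> tensor_ideal t \<Longrightarrow> y \<in> tensor_ideal t \<Longrightarrow> x + y \<in> tensor_ideal t"
proof (induction rule: tensor_ideal.induct)
  case zero thus ?case by simp
next
  case (add x z)
  thus ?case by (metis add.assoc tensor_ideal.add)
qed

lemma ideal_sum: "finite S \<Longrightarrow> (\<And>i. i \<in> S \<Longrightarrow> f i \<in> ideal_gens t) \<Longrightarrow> sum f S \<in> tensor_ideal t"
proof (induction S rule: finite_induct)
  case empty thus ?case by (simp add: tensor_ideal.zero)
next
  case (insert x F)
  have "f x \<in> tensor_ideal t" using insert tensor_ideal.add[OF _ tensor_ideal.zero, of "f x" t] by simp
  thus ?case using insert ideal_add by (simp)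
qed

lemma ideal_sum': "finite S \<Longrightarrow> (\<And>i. i \<in> S \<Longrightarrow> f i \<in> tensor_ideal t) \<Longrightarrow> sum f S \<in> tensor_ideal t"
proof (induction S rule: finite_induct)
  case empty thus ?case by (simp add: tensor_ideal.zero)
next
  case (insert x F)
  thus ?case using ideal_add[of "f x" t "sum f F"] by simp
qed

lemma gen_ideal: "x \<in> ideal_gens t \<Longrightarrow> x \<in> tensor_ideal t"
  using tensor_ideal.add[OF _ tensor_ideal.zero] by simp

lemma double_delta:
  assumes "finite S" "finite T" "a \<in> S" "b \<in> T"
  shows "(\<Sum>x\<in>S. \<Sum>y\<in>T. (f x y when [Z x, Z y] = [Z a, Z b])) = (f a b :: 'b::comm_monoid_add)"
proof -
  have "(\<Sum>x\<in>S. \<Sum>y\<in>T. (f x y when [Z x, Z y] = [Z a, Z b])) = (\<Sum>x\<in>S. (if x = a then f x b else 0))"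
  proof (rule sum.cong[OF refl])
    fix x assume "x \<in> S"
    show "(\<Sum>y\<in>T. (f x y when [Z x, Z y] = [Z a, Z b])) = (if x = a then f x b else 0)"
    proof (cases "x = a")
      case True
      have "(\<Sum>y\<in>T. (f x y when [Z x, Z y] = [Z a, Z b])) = (\<Sum>y\<in>T. (if b = y then f x y else 0))"
        by (rule sum.cong[OF refl]) (auto simp: True when_def)
      also have "\<dots> = f x b" using assms(2,4) by simp
      finally show ?thesis using True by simp
    next
      case False
      thus ?thesis by (simp add: when_def)
    qed
  qed
  also have "\<dots> = f a b" using assms by simp
  finally show ?thesis .
qed

lemma tau_eq: "tauSigma N M k b d = (\<Sum>\<alpha>\<in>{1..4}. \<Sum>\<beta>\<in>{1..4}.
    Poly_Mapping.single [Z \<alpha>, Z \<beta>] (\<Sum>r\<in>{1..2*k+2}. N \<alpha> b r * M \<beta> r d))"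
proof -
  have "tauSigma N M k b d = (\<Sum>r\<in>{1..2*k+2}. \<Sum>\<alpha>\<in>{1..4}. \<Sum>\<beta>\<in>{1..4}.
        Poly_Mapping.single [Z \<alpha>, Z \<beta>] (N \<alpha> b r * M \<beta> r d))" by (simp add: tauSigma_def)
  also have "\<dots> = (\<Sum>\<alpha>\<in>{1..4}. \<Sum>r\<in>{1..2*k+2}. \<Sum>\<beta>\<in>{1..4}.
        Poly_Mapping.single [Z \<alpha>, Z \<beta>] (N \<alpha> b r * M \<beta> r d))" by (rule sum.swap)
  also have "\<dots> = (\<Sum>\<alpha>\<in>{1..4}. \<Sum>\<beta>\<in>{1..4}. \<Sum>r\<in>{1..2*k+2}.
        Poly_Mapping.single [Z \<alpha>, Z \<beta>] (N \<alpha> b r * M \<beta> r d))"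
    by (rule sum.cong[OF refl], rule sum.swap)
  finally show ?thesis by (simp only: single_sum)
qed


lemma lookup_tau:
  assumes "a \<in> {1..4}" "b' \<in> {1..4}"
  shows "Poly_Mapping.lookup (tauSigma N M k b d) [Z a, Z b'] = (\<Sum>r\<in>{1..2*k+2}. N a b r * M b' r d)"
  unfolding tau_eq lookup_sum lookup_single
  by (rule double_delta[where f = "\<lambda>a b'. (\<Sum>r\<in>{1..2*k+2}. N a b r * M b' r d)"]) (use assms in auto)

lemma cond_eq:
  "(\<Sum>r\<in>R. N a b r * M b' r d + scaleC e (N b' b r * M a r d)) =
   (\<Sum>r\<in>R. N a b r * M b' r d) + scaleC e (\<Sum>r\<in>R. N b' b r * M a r d)"
  by (simp add: sum.distrib scaleC_sum)

lemma half_half: "scaleC (1/2) x + scaleC (1/2) x = (x::'r::complex_algebra)"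
  by (simp add: scaleC_add_left[symmetric] scaleC_one)

theorem proposition4p3:
  fixes \<theta> :: real and k :: nat
    and N M :: "nat \<Rightarrow> nat \<Rightarrow> nat \<Rightarrow> 'r::complex_algebra"
  assumes "k \<ge> 1"
  shows "(\<forall>b\<in>{1..k}. \<forall>d\<in>{1..k}. vanishes_in_RA \<theta> (tauSigma N M k b d)) \<longleftrightarrow>
         (\<forall>b\<in>{1..k}. \<forall>d\<in>{1..k}. \<forall>\<alpha>\<in>{1..4}. \<forall>\<beta>\<in>{1..4}.
            (\<Sum>r\<in>{1..2*k+2}. N \<alpha> b r * M \<beta> r d + scaleC (eta \<theta> \<beta> \<alpha>) (N \<beta> b r * M \<alpha> r d)) = 0)"
proof -
  have key: "vanishes_in_RA \<theta> (tauSigma N M k b d) \<longleftrightarrow>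
      (\<forall>\<alpha>\<in>{1..4}. \<forall>\<beta>\<in>{1..4}.
            (\<Sum>r\<in>{1..2*k+2}. N \<alpha> b r * M \<beta> r d + scaleC (eta \<theta> \<beta> \<alpha>) (N \<beta> b r * M \<alpha> r d)) = 0)"
    for b d
  proof -
    define A where "A = (\<lambda>a c :: nat. \<Sum>r\<in>{1..2*k+2}. N a b r * M c r d)"
    have C: "(\<Sum>r\<in>{1..2*k+2}. N (a::nat) b r * M c r d + scaleC (eta \<theta> c a) (N c b r * M a r d))
       = A a c + scaleC (eta \<theta> c a) (A c a)" for a c
      unfolding A_def by (rule cond_eq)
    have T: "tauSigma N M k b d = (\<Sum>a\<in>{1..4}. \<Sum>c\<in>{1..4}. Poly_Mapping.single [Z a, Z c] (A a c))"
      unfolding A_def by (rule tau_eq)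
    show ?thesis
    proof
      assume v: "vanishes_in_RA \<theta> (tauSigma N M k b d)"
      show "\<forall>\<alpha>\<in>{1..4}. \<forall>\<beta>\<in>{1..4}. (\<Sum>r\<in>{1..2*k+2}. N \<alpha> b r * M \<beta> r d + scaleC (eta \<theta> \<beta> \<alpha>) (N \<beta> b r * M \<alpha> r d)) = 0"
      proof (intro ballI)
        fix a c :: nat assume a: "a \<in> {1..4}" and c: "c \<in> {1..4}"
        have "phi \<theta> a c (tauSigma N M k b d) = 0"
          using phi_ideal[OF v[unfolded vanishes_in_RA_def] a c] .
        show "(\<Sum>r\<in>{1..2*k+2}. N a b r * M c r d + scaleC (eta \<theta> c a) (N c b r * M a r d)) = 0"
        proof -
          have l1: "Poly_Mapping.lookup (tauSigma N M k b d) [Z a, Z c] = A a c"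
            unfolding A_def by (rule lookup_tau[OF a c])
          have l2: "Poly_Mapping.lookup (tauSigma N M k b d) [Z c, Z a] = A c a"
            unfolding A_def by (rule lookup_tau[OF c a])
          show ?thesis using \<open>phi \<theta> a c (tauSigma N M k b d) = 0\<close> unfolding C phi_def l1 l2 .
        qed
      qed
    next
      assume h: "\<forall>\<alpha>\<in>{1..4}. \<forall>\<beta>\<in>{1..4}. (\<Sum>r\<in>{1..2*k+2}. N \<alpha> b r * M \<beta> r d + scaleC (eta \<theta> \<beta> \<alpha>) (N \<beta> b r * M \<alpha> r d)) = 0"
      have hA: "A a c + scaleC (eta \<theta> c a) (A c a) = 0" if "a \<in> {1..4}" "c \<in> {1..4}" for a c
        using h that C[symmetric] by simp
      define h2 where "h2 = (\<lambda>a c. scaleC (1/2) (A a c))"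
      define g where "g = (\<lambda>a c. Poly_Mapping.single [Z a, Z c] (h2 a c)
           - Poly_Mapping.single [Z c, Z a] (scaleC (eta \<theta> a c) (h2 a c)))"
      have gI: "g a c \<in> tensor_ideal \<theta>" if "a \<in> {1..4}" "c \<in> {1..4}" for a c
      proof (rule gen_ideal)
        have "([Z a, Z c], [Z c, Z a], eta \<theta> a c) \<in> rels \<theta>"
          unfolding rels_def using that by blast
        moreover have "g a c = Poly_Mapping.single ([] @ [Z a, Z c] @ []) (h2 a c)
           - Poly_Mapping.single ([] @ [Z c, Z a] @ []) (scaleC (eta \<theta> a c) (h2 a c))"
          by (simp add: g_def)
        moreover have "valid_word []" by (simp add: valid_word_def)
        ultimately show "g a c \<in> ideal_gens \<theta>"
          unfolding ideal_gens_def by blast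
      qed
      have neg: "scaleC (eta \<theta> c a) (h2 c a) = - h2 a c" if "a \<in> {1..4}" "c \<in> {1..4}" for a c
      proof -
        have "scaleC (eta \<theta> c a) (h2 c a) = scaleC (1/2) (scaleC (eta \<theta> c a) (A c a))"
          by (simp add: h2_def scaleC_scaleC mult.commute)
        also have "scaleC (eta \<theta> c a) (A c a) = - A a c" using hA[OF that]
          by (simp add: eq_neg_iff_add_eq_0 add.commute)
        finally show ?thesis by (simp add: h2_def scaleC_minus)
      qed
      have "(\<Sum>a\<in>{1..4}. \<Sum>c\<in>{1..4}. g a c) =
          (\<Sum>a\<in>{1..4}. \<Sum>c\<in>{1..4}. Poly_Mapping.single [Z a, Z c] (h2 a c))
          - (\<Sum>a\<in>{1..4::nat}. \<Sum>c\<in>{1..4::nat}. Poly_Mapping.single [Z c, Z a] (scaleC (eta \<theta> a c) (h2 a c)))"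
        by (simp add: g_def sum_subtractf)
      also have "(\<Sum>a\<in>{1..4::nat}. \<Sum>c\<in>{1..4::nat}. Poly_Mapping.single [Z c, Z a] (scaleC (eta \<theta> a c) (h2 a c)))
          = (\<Sum>c\<in>{1..4::nat}. \<Sum>a\<in>{1..4::nat}. Poly_Mapping.single [Z c, Z a] (scaleC (eta \<theta> a c) (h2 a c)))"
        by (rule sum.swap)
      also have "\<dots> = (\<Sum>c\<in>{1..4::nat}. \<Sum>a\<in>{1..4::nat}. Poly_Mapping.single [Z c, Z a] (- h2 c a))"
        by (intro sum.cong refl) (simp add: neg)
      also have "(\<Sum>a\<in>{1..4}. \<Sum>c\<in>{1..4}. Poly_Mapping.single [Z a, Z c] (h2 a c)) - \<dots>
          = (\<Sum>a\<in>{1..4}. \<Sum>c\<in>{1..4}. Poly_Mapping.single [Z a, Z c] (A a c))"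
        by (simp add: single_uminus sum_negf h2_def half_half flip: single_add sum.distrib)
      finally have "tauSigma N M k b d = (\<Sum>a\<in>{1..4}. \<Sum>c\<in>{1..4}. g a c)" using T by simp
      moreover have "(\<Sum>a\<in>{1..4}. \<Sum>c\<in>{1..4}. g a c) \<in> tensor_ideal \<theta>"
        by (intro ideal_sum' gI) auto
      ultimately show "vanishes_in_RA \<theta> (tauSigma N M k b d)"
        unfolding vanishes_in_RA_def by simp
    qed
  qed
  show ?thesis using key by blast
qed

end
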